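(* Let $A=\bigoplus_{k=0}^nA_k$ be a finite-dimensional $\mathbb Z_+$-graded algebra with $A_0=\mathbb C$, equipped with a $\Gamma$-valued filtration $\{F_\alpha A_k: k\in\mathbb Z_+,\alpha\in\Gamma_k\}$ for a graded ordered semigroup $\Gamma$. If the associated $\Gamma$-graded algebra $\mathrm{gr}^FA$ is a Frobenius algebra, then $A$ is a Frobenius algebra.
   Context: A graded ordered semigroup is a semigroup $\Gamma$ with unit $e$, a homomorphism $g:\Gamma\to\mathbb Z_+$ with $g^{-1}(0)=\{e\}$ and each $\Gamma_n=g^{-1}(n)$ finite and totally ordered, such that $\alpha<\beta$ in $\Gamma_n$ implies $\alpha\gamma<\beta\gamma$ and $\gamma\alpha<\gamma\beta$. A $\Gamma$-valued filtration on a graded algebra $A$ is a family of subspaces $F_\alpha\subseteq A_n$ ($\alpha\in\Gamma_n$) with $F_\alpha\subseteq F_\beta$ for $\alpha\le\beta$, $F_{\gamma_n}=A_n$ for the maximal $\gamma_n\in\Gamma_n$, and $F_\alpha F_\beta\subseteq F_{\alpha\beta}$. The associated graded algebra is $\mathrm{gr}^FA=\bigoplus_{\alpha\in\Gamma}F_\alpha/F_{\alpha'}$, where $\alpha'$ is the immediate predecessor of $\alpha$ in $\Gamma_{g(\alpha)}$ ($F_{\alpha'}=0$ if $\alpha$ is minimal). A finite-dimensional algebra is Frobenius if some linear functional on it has kernel containing no nonzero left ideal. *)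

theory Defs
  imports Complex_Main
begin

definition graded_ordered_semigroup ::
  "('g::monoid_mult \<Rightarrow> nat) \<Rightarrow> ('g \<Rightarrow> 'g \<Rightarrow> bool) \<Rightarrow> bool" where
  "graded_ordered_semigroup g lt \<longleftrightarrow>
     (\<forall>a b. g (a * b) = g a + g b) \<and>
     {a. g a = 0} = {1} \<and>
     (\<forall>n. finite {a. g a = n}) \<and>
     (\<forall>a b. lt a b \<longrightarrow> g a = g b) \<and>
     (\<forall>a. \<not> lt a a) \<and>
     (\<forall>a b c. lt a b \<longrightarrow> lt b c \<longrightarrow> lt a c) \<and>
     (\<forall>a b. g a = g b \<longrightarrow> a = b \<or> lt a b \<or> lt b a) \<and>
     (\<forall>a b c. lt a b \<longrightarrow> lt (a * c) (b * c) \<and> lt (c * a) (c * b))"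

definition gpred :: "('g \<Rightarrow> 'g \<Rightarrow> bool) \<Rightarrow> 'g \<Rightarrow> 'g" where
  "gpred lt \<alpha> = (THE \<beta>. lt \<beta> \<alpha> \<and> (\<forall>\<gamma>. lt \<gamma> \<alpha> \<longrightarrow> \<not> lt \<beta> \<gamma>))"

definition complex_algebra :: "(complex \<Rightarrow> 'a::ring_1 \<Rightarrow> 'a) \<Rightarrow> bool" where
  "complex_algebra smul \<longleftrightarrow> vector_space smul \<and>
     (\<forall>c x y. smul c (x * y) = smul c x * y \<and> smul c (x * y) = x * smul c y)"

definition fin_dim :: "(complex \<Rightarrow> 'a::ring_1 \<Rightarrow> 'a) \<Rightarrow> bool" where
  "fin_dim smul \<longleftrightarrow> (\<exists>B. finite B \<and> module.span smul B = UNIV)"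

definition graded_algebra ::
  "(complex \<Rightarrow> 'a::ring_1 \<Rightarrow> 'a) \<Rightarrow> (nat \<Rightarrow> 'a set) \<Rightarrow> nat \<Rightarrow> bool" where
  "graded_algebra smul A n \<longleftrightarrow>
     complex_algebra smul \<and>
     (\<forall>k. module.subspace smul (A k)) \<and>
     (\<forall>k>n. A k = {0}) \<and>
     (\<forall>x. \<exists>!f. (\<forall>k. f k \<in> A k) \<and> x = (\<Sum>k\<le>n. f k)) \<and>
     (\<forall>j k x y. x \<in> A j \<longrightarrow> y \<in> A k \<longrightarrow> x * y \<in> A (j + k)) \<and>
     A 0 = range (\<lambda>c. smul c 1) \<and> (1::'a) \<noteq> 0"

definition gamma_filtration ::
  "(complex \<Rightarrow> 'a::ring_1 \<Rightarrow> 'a) \<Rightarrow> (nat \<Rightarrow> 'a set) \<Rightarrow>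
   ('g::monoid_mult \<Rightarrow> nat) \<Rightarrow> ('g \<Rightarrow> 'g \<Rightarrow> bool) \<Rightarrow> ('g \<Rightarrow> 'a set) \<Rightarrow> bool" where
  "gamma_filtration smul A g lt F \<longleftrightarrow>
     (\<forall>\<alpha>. module.subspace smul (F \<alpha>) \<and> F \<alpha> \<subseteq> A (g \<alpha>)) \<and>
     (\<forall>\<alpha> \<beta>. lt \<alpha> \<beta> \<longrightarrow> F \<alpha> \<subseteq> F \<beta>) \<and>
     (\<forall>\<gamma>. (\<forall>\<beta>. g \<beta> = g \<gamma> \<longrightarrow> \<not> lt \<gamma> \<beta>) \<longrightarrow> F \<gamma> = A (g \<gamma>)) \<and>
     (\<forall>k. A k \<noteq> {0} \<longrightarrow> (\<exists>\<gamma>. g \<gamma> = k)) \<and>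
     (\<forall>\<alpha> \<beta> x y. x \<in> F \<alpha> \<longrightarrow> y \<in> F \<beta> \<longrightarrow> x * y \<in> F (\<alpha> * \<beta>))"

definition Fprev :: "('g \<Rightarrow> 'g \<Rightarrow> bool) \<Rightarrow> ('g \<Rightarrow> 'a::zero set) \<Rightarrow> 'g \<Rightarrow> 'a set" where
  "Fprev lt F \<alpha> = (if \<exists>\<beta>. lt \<beta> \<alpha> then F (gpred lt \<alpha>) else {0})"

definition left_ideal ::
  "'v set \<Rightarrow> ('v \<Rightarrow> 'v \<Rightarrow> 'v) \<Rightarrow> (complex \<Rightarrow> 'v \<Rightarrow> 'v) \<Rightarrow> ('v \<Rightarrow> 'v \<Rightarrow> 'v) \<Rightarrow> 'v
    \<Rightarrow> 'v set \<Rightarrow> bool" where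
  "left_ideal S add smul mul z I \<longleftrightarrow> I \<subseteq> S \<and> z \<in> I \<and>
     (\<forall>x\<in>I. \<forall>y\<in>I. add x y \<in> I) \<and> (\<forall>c. \<forall>x\<in>I. smul c x \<in> I) \<and>
     (\<forall>a\<in>S. \<forall>x\<in>I. mul a x \<in> I)"

definition frobenius ::
  "'v set \<Rightarrow> ('v \<Rightarrow> 'v \<Rightarrow> 'v) \<Rightarrow> (complex \<Rightarrow> 'v \<Rightarrow> 'v) \<Rightarrow> ('v \<Rightarrow> 'v \<Rightarrow> 'v) \<Rightarrow> 'v \<Rightarrow> bool" where
  "frobenius S add smul mul z \<longleftrightarrow>
     (\<exists>\<phi> :: 'v \<Rightarrow> complex.
        (\<forall>x\<in>S. \<forall>y\<in>S. \<phi> (add x y) = \<phi> x + \<phi> y) \<and>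
        (\<forall>c. \<forall>x\<in>S. \<phi> (smul c x) = c * \<phi> x) \<and>
        (\<forall>I. left_ideal S add smul mul z I \<longrightarrow> (\<forall>x\<in>I. \<phi> x = 0) \<longrightarrow> I \<subseteq> {z}))"

text \<open>Representatives: families x with x alpha in F alpha; two families represent the
  same element of (direct sum over alpha of) F_alpha / F_alpha' iff they agree
  modulo F_alpha' in every component.\<close>

definition gr_reps :: "('g \<Rightarrow> 'a set) \<Rightarrow> ('g \<Rightarrow> 'a) set" where
  "gr_reps F = {x. \<forall>\<alpha>. x \<alpha> \<in> F \<alpha>}"

definition gr_cls :: "('g \<Rightarrow> 'g \<Rightarrow> bool) \<Rightarrow> ('g \<Rightarrow> 'a::ab_group_add set) \<Rightarrow> ('g \<Rightarrow> 'a) \<Rightarrow> ('g \<Rightarrow> 'a) set" where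
  "gr_cls lt F x = {y \<in> gr_reps F. \<forall>\<alpha>. x \<alpha> - y \<alpha> \<in> Fprev lt F \<alpha>}"

definition gr_carrier :: "('g \<Rightarrow> 'g \<Rightarrow> bool) \<Rightarrow> ('g \<Rightarrow> 'a::ab_group_add set) \<Rightarrow> ('g \<Rightarrow> 'a) set set" where
  "gr_carrier lt F = gr_cls lt F ` gr_reps F"

definition gr_rep :: "('g \<Rightarrow> 'a) set \<Rightarrow> 'g \<Rightarrow> 'a" where
  "gr_rep X = (SOME x. x \<in> X)"

definition gr_add :: "('g \<Rightarrow> 'g \<Rightarrow> bool) \<Rightarrow> ('g \<Rightarrow> 'a::ab_group_add set) \<Rightarrow>
    ('g \<Rightarrow> 'a) set \<Rightarrow> ('g \<Rightarrow> 'a) set \<Rightarrow> ('g \<Rightarrow> 'a) set" where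
  "gr_add lt F X Y = gr_cls lt F (\<lambda>\<alpha>. gr_rep X \<alpha> + gr_rep Y \<alpha>)"

definition gr_smul :: "(complex \<Rightarrow> 'a \<Rightarrow> 'a) \<Rightarrow> ('g \<Rightarrow> 'g \<Rightarrow> bool) \<Rightarrow> ('g \<Rightarrow> 'a::ab_group_add set) \<Rightarrow>
    complex \<Rightarrow> ('g \<Rightarrow> 'a) set \<Rightarrow> ('g \<Rightarrow> 'a) set" where
  "gr_smul smul lt F c X = gr_cls lt F (\<lambda>\<alpha>. smul c (gr_rep X \<alpha>))"

text \<open>Multiplication: the class of the component alpha*beta of the product is
  the class of the product of the components; summing over all factorizations
  gamma = alpha * beta (a finite set).\<close>
definition gr_mul :: "('g::monoid_mult \<Rightarrow> 'g \<Rightarrow> bool) \<Rightarrow> ('g \<Rightarrow> 'a::ring_1 set) \<Rightarrow>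
    ('g \<Rightarrow> 'a) set \<Rightarrow> ('g \<Rightarrow> 'a) set \<Rightarrow> ('g \<Rightarrow> 'a) set" where
  "gr_mul lt F X Y = gr_cls lt F (\<lambda>\<gamma>.
      \<Sum>p\<in>{(\<alpha>, \<beta>). \<alpha> * \<beta> = \<gamma>}. gr_rep X (fst p) * gr_rep Y (snd p))"

definition gr_zero :: "('g \<Rightarrow> 'g \<Rightarrow> bool) \<Rightarrow> ('g \<Rightarrow> 'a::ab_group_add set) \<Rightarrow> ('g \<Rightarrow> 'a) set" where
  "gr_zero lt F = gr_cls lt F (\<lambda>_. 0)"

definition gr_frobenius :: "(complex \<Rightarrow> 'a::ring_1 \<Rightarrow> 'a) \<Rightarrow> ('g::monoid_mult \<Rightarrow> 'g \<Rightarrow> bool)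
    \<Rightarrow> ('g \<Rightarrow> 'a set) \<Rightarrow> bool" where
  "gr_frobenius smul lt F \<longleftrightarrow>
     frobenius (gr_carrier lt F) (gr_add lt F) (gr_smul smul lt F) (gr_mul lt F) (gr_zero lt F)"

end

theory Submission imports Defs begin

lemma finite_min_rel:
  assumes "finite S" "S \<noteq> {}" "\<forall>a. \<not> r a a" "\<forall>a b c. r a b \<longrightarrow> r b c \<longrightarrow> r a c"
  shows "\<exists>m\<in>S. \<forall>x\<in>S. \<not> r x m"
  using assms(1,2)
proof (induction S rule: finite_ne_induct)
  case (singleton x) then show ?case using assms(3) by auto
next
  case (insert x S)
  then obtain m where m: "m \<in> S" "\<forall>y\<in>S. \<not> r y m" by auto
  show ?case
  proof (cases "r x m")
    case True
    then have "\<forall>y\<in>insert x S. \<not> r y x" using m assms(3,4) by blast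
    then show ?thesis by blast
  next
    case False
    then show ?thesis using m by blast
  qed
qed

locale pf =
  fixes smul :: "complex \<Rightarrow> 'a::ring_1 \<Rightarrow> 'a" and A :: "nat \<Rightarrow> 'a set" and n :: nat
    and g :: "'g::monoid_mult \<Rightarrow> nat" and lt :: "'g \<Rightarrow> 'g \<Rightarrow> bool" and F :: "'g \<Rightarrow> 'a set"
  assumes GA: "graded_algebra smul A n" and GS: "graded_ordered_semigroup g lt"
    and GF: "gamma_filtration smul A g lt F" and FR: "gr_frobenius smul lt F"
begin

sublocale V: vector_space smul using GA unfolding graded_algebra_def complex_algebra_def by auto

lemma g_mult: "g (a * b) = g a + g b" using GS unfolding graded_ordered_semigroup_def by auto
lemma g_zero: "g a = 0 \<longleftrightarrow> a = 1" using GS unfolding graded_ordered_semigroup_def by auto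
lemma g_fin: "finite {a. g a = k}" using GS unfolding graded_ordered_semigroup_def by auto
lemma lt_g: "lt a b \<Longrightarrow> g a = g b" using GS unfolding graded_ordered_semigroup_def by auto
lemma lt_irr: "\<not> lt a a" using GS unfolding graded_ordered_semigroup_def by auto
lemma lt_trans: "lt a b \<Longrightarrow> lt b c \<Longrightarrow> lt a c" using GS unfolding graded_ordered_semigroup_def by blast
lemma lt_total: "g a = g b \<Longrightarrow> a = b \<or> lt a b \<or> lt b a" using GS unfolding graded_ordered_semigroup_def by blast
lemma lt_mult: "lt a b \<Longrightarrow> lt (c * a) (c * b)" using GS unfolding graded_ordered_semigroup_def by blast

lemma A_sub: "V.subspace (A k)" using GA unfolding graded_algebra_def by auto
lemma A_big: "k > n \<Longrightarrow> A k = {0}" using GA unfolding graded_algebra_def by auto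
lemma A_dec: "\<exists>!f. (\<forall>k. f k \<in> A k) \<and> x = (\<Sum>k\<le>n. f k)" using GA unfolding graded_algebra_def by auto
lemma A_mul: "x \<in> A j \<Longrightarrow> y \<in> A k \<Longrightarrow> x * y \<in> A (j + k)" using GA unfolding graded_algebra_def by auto
lemma A0: "A 0 = range (\<lambda>c. smul c 1)" using GA unfolding graded_algebra_def by auto
lemma one_ne: "(1::'a) \<noteq> 0" using GA unfolding graded_algebra_def by auto
lemma smul_mult1: "smul c (x * y) = smul c x * y" using GA unfolding graded_algebra_def complex_algebra_def by auto
lemma smul_mult2: "smul c (x * y) = x * smul c y" using GA unfolding graded_algebra_def complex_algebra_def by metis

lemma F_sub: "V.subspace (F a)" using GF unfolding gamma_filtration_def by auto
lemma F_A: "F a \<subseteq> A (g a)" using GF unfolding gamma_filtration_def by auto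
lemma F_mono: "lt a b \<Longrightarrow> F a \<subseteq> F b" using GF unfolding gamma_filtration_def by auto
lemma F_max: "(\<forall>b. g b = g c \<longrightarrow> \<not> lt c b) \<Longrightarrow> F c = A (g c)" using GF unfolding gamma_filtration_def by auto
lemma F_ex: "A k \<noteq> {0} \<Longrightarrow> \<exists>c. g c = k" using GF unfolding gamma_filtration_def by auto
lemma F_mul: "x \<in> F a \<Longrightarrow> y \<in> F b \<Longrightarrow> x * y \<in> F (a * b)" using GF unfolding gamma_filtration_def by auto

lemma gpred:
  assumes "lt b a"
  shows "lt (gpred lt a) a" "lt c a \<Longrightarrow> c = gpred lt a \<or> lt c (gpred lt a)"
proof -
  have fin: "finite {c. lt c a}"
  proof (rule finite_subset[OF _ g_fin[of "g a"]])
    show "{c. lt c a} \<subseteq> {c. g c = g a}" using lt_g by blast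
  qed
  have irr: "\<forall>x. \<not> lt x x" using lt_irr by blast
  have tr: "\<forall>x y z. lt z y \<longrightarrow> lt y x \<longrightarrow> lt z x" using lt_trans by blast
  have ne: "{c. lt c a} \<noteq> {}" using assms by blast
  obtain m where m1: "lt m a" and m2: "\<forall>x\<in>{c. lt c a}. \<not> lt m x"
    using finite_min_rel[OF fin ne, of "\<lambda>x y. lt y x"] irr tr by blast
  have m3: "\<And>x. lt x a \<Longrightarrow> \<not> lt m x" using m2 by blast
  have eq: "gpred lt a = m" unfolding gpred_def
  proof (rule the_equality)
    show "lt m a \<and> (\<forall>\<gamma>. lt \<gamma> a \<longrightarrow> \<not> lt m \<gamma>)" using m1 m3 by blast
  next
    fix b assume b: "lt b a \<and> (\<forall>\<gamma>. lt \<gamma> a \<longrightarrow> \<not> lt b \<gamma>)"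
    have "g b = g a" using b lt_g by blast
    moreover have "g m = g a" using m1 lt_g by blast
    ultimately have "b = m \<or> lt b m \<or> lt m b" using lt_total by simp
    then show "b = m" using b m1 m3 by blast
  qed
  then show "lt (gpred lt a) a" using m1 by simp
  show "c = gpred lt a \<or> lt c (gpred lt a)" if c: "lt c a"
  proof -
    have "g c = g a" using c lt_g by blast
    moreover have "g m = g a" using m1 lt_g by blast
    ultimately have "c = m \<or> lt c m \<or> lt m c" using lt_total by simp
    then show ?thesis using eq m3[OF c] by blast
  qed
qed

abbreviation "Fp \<equiv> Fprev lt F"
abbreviation "cls \<equiv> gr_cls lt F"
abbreviation "reps \<equiv> gr_reps F"

lemma Fp_sub: "V.subspace (Fp a)"
  unfolding Fprev_def using F_sub V.subspace_single_0 by auto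

lemma lt_Fp: "lt c a \<Longrightarrow> F c \<subseteq> Fp a"
  unfolding Fprev_def using gpred[of c a] F_mono by auto

lemma Fp_mul:
  assumes "u \<in> F a" "w \<in> Fp b" shows "u * w \<in> Fp (a * b)"
proof (cases "\<exists>c. lt c b")
  case True
  then obtain c where c: "lt c b" by auto
  have "w \<in> F (gpred lt b)" using assms True unfolding Fprev_def by auto
  then have "u * w \<in> F (a * gpred lt b)" using F_mul assms by auto
  moreover have "lt (a * gpred lt b) (a * b)" using gpred(1)[OF c] lt_mult by auto
  ultimately show ?thesis using lt_Fp by auto
next
  case False
  then have "w = 0" using assms unfolding Fprev_def by auto
  then show ?thesis using V.subspace_0[OF Fp_sub] by simp
qed


lemma Fp_0: "0 \<in> Fp a" using V.subspace_0[OF Fp_sub] .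

lemma cls_self: "x \<in> reps \<Longrightarrow> x \<in> cls x"
  unfolding gr_cls_def using Fp_0 by auto

lemma cls_eqI:
  assumes "x \<in> reps" "y \<in> reps" "\<And>a. x a - y a \<in> Fp a"
  shows "cls x = cls y"
proof -
  have "z \<in> cls x \<longleftrightarrow> z \<in> cls y" for z
  proof -
    have "x a - z a \<in> Fp a \<longleftrightarrow> y a - z a \<in> Fp a" for a
    proof -
      have e1: "y a - z a = (x a - z a) - (x a - y a)" by (simp add: algebra_simps)
      have e2: "x a - z a = (y a - z a) + (x a - y a)" by (simp add: algebra_simps)
      have h: "x a - y a \<in> Fp a" by (rule assms(3))
      show ?thesis
      proof
        assume "x a - z a \<in> Fp a"
        from V.subspace_diff[OF Fp_sub this h] show "y a - z a \<in> Fp a" by (simp only: e1)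
      next
        assume "y a - z a \<in> Fp a"
        from V.subspace_add[OF Fp_sub this h] show "x a - z a \<in> Fp a" by (simp only: e2)
      qed
    qed
    then show ?thesis unfolding gr_cls_def by auto
  qed
  then show ?thesis by auto
qed

lemma rep_cls: assumes "x \<in> reps" shows "gr_rep (cls x) \<in> cls x"
  unfolding gr_rep_def by (rule someI[where P="\<lambda>y. y \<in> cls x", OF cls_self[OF assms]])

lemma rep_cls': assumes "x \<in> reps"
  shows "gr_rep (cls x) \<in> reps" "gr_rep (cls x) a - x a \<in> Fp a"
proof -
  have r: "gr_rep (cls x) \<in> cls x" using rep_cls[OF assms] .
  then show "gr_rep (cls x) \<in> reps" unfolding gr_cls_def by auto
  have "x a - gr_rep (cls x) a \<in> Fp a" using r unfolding gr_cls_def by auto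
  from V.subspace_neg[OF Fp_sub this] show "gr_rep (cls x) a - x a \<in> Fp a" by simp
qed

lemma reps_add: "x \<in> reps \<Longrightarrow> y \<in> reps \<Longrightarrow> (\<lambda>a. x a + y a) \<in> reps"
  unfolding gr_reps_def using V.subspace_add[OF F_sub] by auto

lemma reps_smul: "x \<in> reps \<Longrightarrow> (\<lambda>a. smul c (x a)) \<in> reps"
  unfolding gr_reps_def using V.subspace_scale[OF F_sub] by auto

lemma cls_add:
  assumes "x \<in> reps" "y \<in> reps"
  shows "gr_add lt F (cls x) (cls y) = cls (\<lambda>a. x a + y a)"
  unfolding gr_add_def
proof (rule cls_eqI)
  show "(\<lambda>a. gr_rep (cls x) a + gr_rep (cls y) a) \<in> reps"
    using reps_add rep_cls' assms by blast
  show "(\<lambda>a. x a + y a) \<in> reps" using reps_add assms by blast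
  fix a
  have eq: "(gr_rep (cls x) a + gr_rep (cls y) a) - (x a + y a)
     = (gr_rep (cls x) a - x a) + (gr_rep (cls y) a - y a)" by (simp add: algebra_simps)
  show "(gr_rep (cls x) a + gr_rep (cls y) a) - (x a + y a) \<in> Fp a" unfolding eq
    by (rule V.subspace_add[OF Fp_sub rep_cls'(2)[OF assms(1)] rep_cls'(2)[OF assms(2)]])
qed

lemma cls_smul:
  assumes "x \<in> reps"
  shows "gr_smul smul lt F c (cls x) = cls (\<lambda>a. smul c (x a))"
  unfolding gr_smul_def
proof (rule cls_eqI)
  show "(\<lambda>a. smul c (gr_rep (cls x) a)) \<in> reps"
    using reps_smul rep_cls' assms by blast
  show "(\<lambda>a. smul c (x a)) \<in> reps" using reps_smul assms by blast
  fix a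
  have eq: "smul c (gr_rep (cls x) a) - smul c (x a) = smul c (gr_rep (cls x) a - x a)"
    by (rule V.scale_right_diff_distrib[symmetric])
  show "smul c (gr_rep (cls x) a) - smul c (x a) \<in> Fp a" unfolding eq
    by (rule V.subspace_scale[OF Fp_sub rep_cls'(2)[OF assms]])
qed

lemma cls_ne_zero:
  assumes "x \<in> reps" "x a \<notin> Fp a"
  shows "cls x \<noteq> gr_zero lt F"
proof
  assume "cls x = gr_zero lt F"
  then have "x \<in> cls (\<lambda>_. 0)" using cls_self[OF assms(1)] unfolding gr_zero_def by simp
  then have "0 - x a \<in> Fp a" unfolding gr_cls_def by blast
  then have "- x a \<in> Fp a" by simp
  from V.subspace_neg[OF Fp_sub this] have "x a \<in> Fp a" by simp
  with assms(2) show False by blast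
qed

lemma cls_carrier: "x \<in> reps \<Longrightarrow> cls x \<in> gr_carrier lt F"
  unfolding gr_carrier_def by (rule imageI)


lemma finite_le: "finite {a. g a \<le> m}"
proof -
  have "{a. g a \<le> m} = (\<Union>k\<in>{..m}. {a. g a = k})" by auto
  then show ?thesis using g_fin by simp
qed

lemma fin_fact: "finite {(a, b). a * b = (c::'g)}"
proof (rule finite_subset)
  show "{(a, b). a * b = c} \<subseteq> {a. g a \<le> g c} \<times> {a. g a \<le> g c}"
  proof
    fix p assume "p \<in> {(a, b). a * b = c}"
    then obtain a b where p: "p = (a, b)" "a * b = c" by auto
    then have "g c = g a + g b" using g_mult by auto
    then show "p \<in> {a. g a \<le> g c} \<times> {a. g a \<le> g c}" using p by auto
  qed
  show "finite ({a. g a \<le> g c} \<times> {a. g a \<le> g c})" using finite_le by auto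
qed

definition "psi = (SOME \<phi> :: ('g \<Rightarrow> 'a) set \<Rightarrow> complex.
        (\<forall>x\<in>gr_carrier lt F. \<forall>y\<in>gr_carrier lt F. \<phi> (gr_add lt F x y) = \<phi> x + \<phi> y) \<and>
        (\<forall>c. \<forall>x\<in>gr_carrier lt F. \<phi> (gr_smul smul lt F c x) = c * \<phi> x) \<and>
        (\<forall>I. left_ideal (gr_carrier lt F) (gr_add lt F) (gr_smul smul lt F) (gr_mul lt F) (gr_zero lt F) I
             \<longrightarrow> (\<forall>x\<in>I. \<phi> x = 0) \<longrightarrow> I \<subseteq> {gr_zero lt F}))"

lemma psi:
  "(\<forall>x\<in>gr_carrier lt F. \<forall>y\<in>gr_carrier lt F. psi (gr_add lt F x y) = psi x + psi y) \<and>
        (\<forall>c. \<forall>x\<in>gr_carrier lt F. psi (gr_smul smul lt F c x) = c * psi x) \<and>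
        (\<forall>I. left_ideal (gr_carrier lt F) (gr_add lt F) (gr_smul smul lt F) (gr_mul lt F) (gr_zero lt F) I
             \<longrightarrow> (\<forall>x\<in>I. psi x = 0) \<longrightarrow> I \<subseteq> {gr_zero lt F})"
  using FR[unfolded gr_frobenius_def frobenius_def] unfolding psi_def by (rule someI_ex)

lemma psi1: "\<forall>x\<in>gr_carrier lt F. \<forall>y\<in>gr_carrier lt F. psi (gr_add lt F x y) = psi x + psi y"
  using psi by (rule conjunct1)
lemma psi2: "\<forall>c. \<forall>x\<in>gr_carrier lt F. psi (gr_smul smul lt F c x) = c * psi x"
  using psi by blast
lemma psi3: "left_ideal (gr_carrier lt F) (gr_add lt F) (gr_smul smul lt F) (gr_mul lt F) (gr_zero lt F) I
             \<Longrightarrow> (\<forall>x\<in>I. psi x = 0) \<Longrightarrow> I \<subseteq> {gr_zero lt F}"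
  using psi by blast

lemma psi_add: assumes "x \<in> reps" "y \<in> reps"
  shows "psi (cls (\<lambda>a. x a + y a)) = psi (cls x) + psi (cls y)"
proof -
  have "psi (gr_add lt F (cls x) (cls y)) = psi (cls x) + psi (cls y)"
    using psi1 cls_carrier[OF assms(1)] cls_carrier[OF assms(2)] by blast
  then show ?thesis using cls_add[OF assms] by simp
qed

lemma psi_smul: assumes "x \<in> reps" shows "psi (cls (\<lambda>a. smul c (x a))) = c * psi (cls x)"
proof -
  have "psi (gr_smul smul lt F c (cls x)) = c * psi (cls x)"
    using psi2 cls_carrier[OF assms] by blast
  then show ?thesis using cls_smul[OF assms] by simp
qed

lemma F1: "F 1 = A 0"
proof -
  have "F 1 = A (g 1)"
  proof (rule F_max, intro allI impI)
    fix b assume "g b = g (1::'g)"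
    moreover have "g (1::'g) = 0" using g_zero by simp
    ultimately have "b = 1" using g_zero by simp
    then show "\<not> lt 1 b" using lt_irr by simp
  qed
  moreover have "g (1::'g) = 0" using g_zero by simp
  ultimately show ?thesis by simp
qed

definition "soc f \<longleftrightarrow> f \<in> reps \<and> (\<forall>a b u. 0 < g a \<longrightarrow> u \<in> F a \<longrightarrow> u * f b = 0)"

lemma soc_psi:
  assumes S: "soc f" and nz: "cls f \<noteq> gr_zero lt F"
  shows "psi (cls f) \<noteq> 0"
proof
  assume p0: "psi (cls f) = 0"
  have fr: "f \<in> reps" using S unfolding soc_def by auto
  define fc where "fc c = (\<lambda>a. smul c (f a))" for c
  have fcr: "fc c \<in> reps" for c unfolding fc_def using reps_smul[OF fr] .
  define I where "I = range (\<lambda>c. cls (fc c))"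
  have "left_ideal (gr_carrier lt F) (gr_add lt F) (gr_smul smul lt F) (gr_mul lt F) (gr_zero lt F) I"
    unfolding left_ideal_def
  proof (intro conjI ballI allI)
    show "I \<subseteq> gr_carrier lt F" unfolding I_def using cls_carrier fcr by auto
    have "fc 0 = (\<lambda>_. 0)" unfolding fc_def by simp
    then show "gr_zero lt F \<in> I" unfolding I_def gr_zero_def by (metis rangeI)
  next
    fix X Y assume "X \<in> I" "Y \<in> I"
    then obtain c d where X: "X = cls (fc c)" and Y: "Y = cls (fc d)" unfolding I_def by auto
    have "gr_add lt F X Y = cls (\<lambda>a. fc c a + fc d a)" unfolding X Y by (rule cls_add[OF fcr fcr])
    also have "(\<lambda>a. fc c a + fc d a) = fc (c + d)" unfolding fc_def by (simp add: V.scale_left_distrib)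
    finally show "gr_add lt F X Y \<in> I" unfolding I_def by simp
  next
    fix e X assume "X \<in> I"
    then obtain c where X: "X = cls (fc c)" unfolding I_def by auto
    have "gr_smul smul lt F e X = cls (\<lambda>a. smul e (fc c a))" unfolding X by (rule cls_smul[OF fcr])
    also have "(\<lambda>a. smul e (fc c a)) = fc (e * c)" unfolding fc_def by simp
    finally show "gr_smul smul lt F e X \<in> I" unfolding I_def by simp
  next
    fix X Y assume XC: "X \<in> gr_carrier lt F" and "Y \<in> I"
    then obtain c where Y: "Y = cls (fc c)" unfolding I_def by auto
    obtain x where xr: "x \<in> reps" and X: "X = cls x" using XC unfolding gr_carrier_def by auto
    define rX where "rX = gr_rep X"
    define rY where "rY = gr_rep Y"
    have rXr: "rX \<in> reps" unfolding rX_def X using rep_cls'(1)[OF xr] .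
    have rYr: "rY \<in> reps" unfolding rY_def Y using rep_cls'(1)[OF fcr] .
    define w where "w b = rY b - fc c b" for b
    have wF: "w b \<in> Fp b" for b unfolding w_def rY_def Y using rep_cls'(2)[OF fcr] .
    have "rX 1 \<in> A 0" using rXr F1 unfolding gr_reps_def by auto
    then obtain e where e: "rX 1 = smul e 1" using A0 by auto
    define h where "h = (\<lambda>\<gamma>. \<Sum>p\<in>{(\<alpha>, \<beta>). \<alpha> * \<beta> = \<gamma>}. rX (fst p) * rY (snd p))"
    have "gr_mul lt F X Y = cls h" unfolding gr_mul_def h_def rX_def rY_def ..
    also have "cls h = cls (fc (e * c))"
    proof (rule cls_eqI)
      show "fc (e * c) \<in> reps" by (rule fcr)
      show "h \<in> reps" unfolding gr_reps_def h_def
      proof (intro CollectI allI)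
        fix \<gamma>
        show "(\<Sum>p\<in>{(\<alpha>, \<beta>). \<alpha> * \<beta> = \<gamma>}. rX (fst p) * rY (snd p)) \<in> F \<gamma>"
        proof (rule V.subspace_sum[OF F_sub])
          fix p assume "p \<in> {(\<alpha>, \<beta>). \<alpha> * \<beta> = \<gamma>}"
          then show "rX (fst p) * rY (snd p) \<in> F \<gamma>"
            using F_mul rXr rYr unfolding gr_reps_def by auto
        qed
      qed
      fix \<gamma> :: 'g
      let ?S = "{(\<alpha>, \<beta>). \<alpha> * \<beta> = \<gamma>}"
      have split: "rX (fst p) * rY (snd p) = rX (fst p) * fc c (snd p) + rX (fst p) * w (snd p)" for p :: "'g \<times> 'g"
        unfolding w_def by (simp add: algebra_simps)
      have split': "(\<lambda>p. rX (fst p) * rY (snd p)) = (\<lambda>p. rX (fst p) * fc c (snd p) + rX (fst p) * w (snd p))"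
        using split by (intro ext) blast
      have t1: "rX (fst p) * fc c (snd p) = (if p = (1, \<gamma>) then fc (e * c) \<gamma> else 0)" if "p \<in> ?S" for p :: "'g \<times> 'g"
      proof (cases "fst p = 1")
        case True
        with that have "p = (1, \<gamma>)" by (cases p) auto
        then show ?thesis unfolding fc_def using e
          by (simp add: smul_mult1[symmetric] V.scale_scale)
      next
        case False
        then have "0 < g (fst p)" using g_zero by auto
        moreover have "rX (fst p) \<in> F (fst p)" using rXr unfolding gr_reps_def by auto
        ultimately have "rX (fst p) * f (snd p) = 0" using S unfolding soc_def by auto
        then have "rX (fst p) * fc c (snd p) = 0" unfolding fc_def by (simp add: smul_mult2[symmetric])
        with False show ?thesis by auto
      qed
      have "h \<gamma> = (\<Sum>p\<in>?S. rX (fst p) * fc c (snd p)) + (\<Sum>p\<in>?S. rX (fst p) * w (snd p))"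
        unfolding h_def split' by (rule sum.distrib)
      also have "(\<Sum>p\<in>?S. rX (fst p) * fc c (snd p)) = (\<Sum>p\<in>?S. if p = (1, \<gamma>) then fc (e * c) \<gamma> else 0)"
        by (rule sum.cong) (use t1 in auto)
      also have "\<dots> = fc (e * c) \<gamma>" using fin_fact by simp
      finally have hg: "h \<gamma> - fc (e * c) \<gamma> = (\<Sum>p\<in>?S. rX (fst p) * w (snd p))" by simp
      show "h \<gamma> - fc (e * c) \<gamma> \<in> Fp \<gamma>" unfolding hg
      proof (rule V.subspace_sum[OF Fp_sub])
        fix p assume "p \<in> ?S"
        then have "fst p * snd p = \<gamma>" by auto
        moreover have "rX (fst p) * w (snd p) \<in> Fp (fst p * snd p)"
          using Fp_mul rXr wF unfolding gr_reps_def by auto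
        ultimately show "rX (fst p) * w (snd p) \<in> Fp \<gamma>" by simp
      qed
    qed
    finally show "gr_mul lt F X Y \<in> I" unfolding I_def by simp
  qed
  moreover have "\<forall>x\<in>I. psi x = 0"
  proof
    fix X assume "X \<in> I"
    then obtain c where "X = cls (fc c)" unfolding I_def by auto
    then show "psi X = 0" unfolding fc_def using psi_smul[OF fr] p0 by simp
  qed
  ultimately have "I \<subseteq> {gr_zero lt F}" by (rule psi3)
  moreover have "fc 1 = f" unfolding fc_def by simp
  then have "cls f \<in> I" unfolding I_def by (metis rangeI)
  ultimately show False using nz by auto
qed


definition "good y \<mu> \<longleftrightarrow> y \<in> F \<mu> \<and> y \<notin> Fp \<mu>"
definition "sc y \<longleftrightarrow> (\<forall>j u. 0 < j \<longrightarrow> u \<in> A j \<longrightarrow> u * y = 0)"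
definition "single \<mu> y = (\<lambda>a. if a = \<mu> then y else (0::'a))"

lemma good_ex:
  assumes y: "y \<in> A d" "y \<noteq> 0"
  shows "\<exists>\<mu>. g \<mu> = d \<and> good y \<mu>"
proof -
  have "A d \<noteq> {0}" using y by auto
  then obtain c0 where c0: "g c0 = d" using F_ex by blast
  have irr: "\<forall>x. \<not> lt x x" using lt_irr by blast
  have tr: "\<forall>x y z. lt z y \<longrightarrow> lt y x \<longrightarrow> lt z x" using lt_trans by blast
  have tr': "\<forall>x y z. lt x y \<longrightarrow> lt y z \<longrightarrow> lt x z" using lt_trans by blast
  obtain m where m1: "m \<in> {c. g c = d}" and m2: "\<forall>x\<in>{c. g c = d}. \<not> lt m x"
    using finite_min_rel[OF g_fin, of d "\<lambda>x y. lt y x"] c0 irr tr by blast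
  have "F m = A (g m)" by (rule F_max) (use m1 m2 in auto)
  then have ym: "y \<in> F m" using m1 y by auto
  define S where "S = {c. g c = d \<and> y \<in> F c}"
  have finS: "finite S" unfolding S_def by (rule finite_subset[OF _ g_fin[of d]]) blast
  have neS: "S \<noteq> {}" unfolding S_def using m1 ym by blast
  obtain \<mu> where mu1: "\<mu> \<in> S" and mu2: "\<forall>x\<in>S. \<not> lt x \<mu>"
    using finite_min_rel[OF finS neS, of lt] irr tr' by blast
  have "y \<notin> Fp \<mu>"
  proof (cases "\<exists>b. lt b \<mu>")
    case True
    then obtain b where b: "lt b \<mu>" by blast
    have gp: "lt (gpred lt \<mu>) \<mu>" using gpred(1)[OF b] .
    show ?thesis
    proof
      assume "y \<in> Fp \<mu>"
      then have "y \<in> F (gpred lt \<mu>)" using True unfolding Fprev_def by simp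
      moreover have "g (gpred lt \<mu>) = d" using lt_g[OF gp] mu1 unfolding S_def by simp
      ultimately have "gpred lt \<mu> \<in> S" unfolding S_def by blast
      then show False using mu2 gp by blast
    qed
  next
    case False
    then show ?thesis using y unfolding Fprev_def by simp
  qed
  then show ?thesis using mu1 unfolding S_def good_def by blast
qed

lemma single_reps: "y \<in> F \<mu> \<Longrightarrow> single \<mu> y \<in> reps"
  unfolding single_def gr_reps_def using V.subspace_0[OF F_sub] by auto

lemma single_ne: "good y \<mu> \<Longrightarrow> cls (single \<mu> y) \<noteq> gr_zero lt F"
  using cls_ne_zero[of "single \<mu> y" \<mu>] single_reps unfolding good_def single_def by simp

lemma F_A': "u \<in> F a \<Longrightarrow> u \<in> A (g a)" using F_A by blast

lemma single_soc: "y \<in> F \<mu> \<Longrightarrow> sc y \<Longrightarrow> soc (single \<mu> y)"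
  unfolding soc_def sc_def single_def using single_reps[of y \<mu>] F_A'
  unfolding single_def by auto

lemma unique_good:
  assumes sy: "sc y" and sz: "sc z" and gy: "good y l" and gz: "good z m"
  shows "l = m"
proof (rule ccontr)
  assume ne: "l \<noteq> m"
  have yF: "y \<in> F l" and zF: "z \<in> F m" using gy gz unfolding good_def by auto
  define Y where "Y = single l y"
  define Z where "Z = single m z"
  have Yr: "Y \<in> reps" and Zr: "Z \<in> reps" unfolding Y_def Z_def using single_reps yF zF by auto
  have pY: "psi (cls Y) \<noteq> 0" unfolding Y_def using soc_psi single_soc[OF yF sy] single_ne[OF gy] by blast
  have pZ: "psi (cls Z) \<noteq> 0" unfolding Z_def using soc_psi single_soc[OF zF sz] single_ne[OF gz] by blast
  define W where "W = (\<lambda>a. smul (psi (cls Z)) (Y a) + smul (- psi (cls Y)) (Z a))"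
  have Wr: "W \<in> reps" unfolding W_def using reps_add reps_smul Yr Zr by blast
  have "psi (cls W) = psi (cls (\<lambda>a. smul (psi (cls Z)) (Y a))) + psi (cls (\<lambda>a. smul (- psi (cls Y)) (Z a)))"
    unfolding W_def by (rule psi_add[OF reps_smul[OF Yr] reps_smul[OF Zr]])
  also have "\<dots> = 0" by (simp only: psi_smul[OF Yr] psi_smul[OF Zr]) simp
  finally have p0: "psi (cls W) = 0" .
  have socW: "soc W" unfolding soc_def
  proof (intro conjI allI impI)
    show "W \<in> reps" by (rule Wr)
    fix a b u assume "0 < g a" "u \<in> F a"
    then have "u * y = 0" "u * z = 0" using sy sz F_A' unfolding sc_def by auto
    then show "u * W b = 0" unfolding W_def Y_def Z_def single_def
      by (simp add: distrib_left right_diff_distrib smul_mult2[symmetric])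
  qed
  have WL: "W l = smul (psi (cls Z)) y" unfolding W_def Y_def Z_def single_def using ne by simp
  have "W l \<notin> Fp l"
  proof
    assume "W l \<in> Fp l"
    then have "smul (inverse (psi (cls Z))) (W l) \<in> Fp l" using V.subspace_scale[OF Fp_sub] by blast
    then have "y \<in> Fp l" unfolding WL using pZ by (simp add: V.scale_scale)
    then show False using gy unfolding good_def by blast
  qed
  then have "cls W \<noteq> gr_zero lt F" using cls_ne_zero[OF Wr] by blast
  then show False using soc_psi[OF socW] p0 by blast
qed


definition "cmpt x = (THE f. (\<forall>k. f k \<in> A k) \<and> x = (\<Sum>k\<le>n. f k))"

lemma cmpt: "cmpt x k \<in> A k" "x = (\<Sum>k\<le>n. cmpt x k)"
proof -
  have "(\<forall>k. cmpt x k \<in> A k) \<and> x = (\<Sum>k\<le>n. cmpt x k)"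
    unfolding cmpt_def by (rule theI'[OF A_dec])
  then show "cmpt x k \<in> A k" "x = (\<Sum>k\<le>n. cmpt x k)" by auto
qed

lemma cmpt_unique: "(\<forall>k. f k \<in> A k) \<Longrightarrow> x = (\<Sum>k\<le>n. f k) \<Longrightarrow> cmpt x = f"
  unfolding cmpt_def by (rule the1_equality[OF A_dec]) auto

lemma cmpt_add: "cmpt (x + y) = (\<lambda>k. cmpt x k + cmpt y k)"
proof (rule cmpt_unique)
  show "\<forall>k. cmpt x k + cmpt y k \<in> A k" using V.subspace_add[OF A_sub] cmpt(1) by blast
  show "x + y = (\<Sum>k\<le>n. cmpt x k + cmpt y k)" by (simp add: sum.distrib cmpt(2)[symmetric])
qed

lemma cmpt_smul: "cmpt (smul c x) = (\<lambda>k. smul c (cmpt x k))"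
proof (rule cmpt_unique)
  show "\<forall>k. smul c (cmpt x k) \<in> A k" using V.subspace_scale[OF A_sub] cmpt(1) by blast
  have "smul c x = smul c (\<Sum>k\<le>n. cmpt x k)" using cmpt(2)[of x] by simp
  then show "smul c x = (\<Sum>k\<le>n. smul c (cmpt x k))" by (simp only: V.scale_sum_right)
qed

lemma cmpt_hom: assumes "y \<in> A j" "j \<le> n" shows "cmpt y j = y"
proof -
  have "cmpt y = (\<lambda>k. if k = j then y else 0)"
  proof (rule cmpt_unique)
    show "\<forall>k. (if k = j then y else 0) \<in> A k" using assms V.subspace_0[OF A_sub] by auto
    show "y = (\<Sum>k\<le>n. if k = j then y else 0)" using assms by simp
  qed
  then show ?thesis by simp
qed

definition "Nt = Max {k. k \<le> n \<and> A k \<noteq> {0}}"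

lemma Nt: "Nt \<le> n" "A Nt \<noteq> {0}" "k > Nt \<Longrightarrow> A k = {0}"
proof -
  have fin: "finite {k. k \<le> n \<and> A k \<noteq> {0}}" by auto
  have "1 \<in> A 0" using A0 V.scale_one by (metis rangeI)
  then have ne: "0 \<in> {k. k \<le> n \<and> A k \<noteq> {0}}" using one_ne by auto
  have "Nt \<in> {k. k \<le> n \<and> A k \<noteq> {0}}" unfolding Nt_def by (rule Max_in[OF fin]) (use ne in blast)
  then show "Nt \<le> n" "A Nt \<noteq> {0}" by auto
  show "A k = {0}" if "k > Nt"
  proof (rule ccontr)
    assume "A k \<noteq> {0}"
    moreover have "k \<le> n" using that A_big \<open>A k \<noteq> {0}\<close> by (meson not_le)
    ultimately have "k \<le> Nt" unfolding Nt_def using fin by (intro Max_ge) auto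
    then show False using that by simp
  qed
qed

lemma sc_top: "y \<in> A Nt \<Longrightarrow> sc y"
  unfolding sc_def
proof (intro allI impI)
  fix j u assume "y \<in> A Nt" "0 < j" "u \<in> A j"
  then have "u * y \<in> A (j + Nt)" using A_mul by blast
  moreover have "A (j + Nt) = {0}" using Nt(3) \<open>0 < j\<close> by simp
  ultimately show "u * y = 0" by simp
qed

definition "z0 = (SOME z. z \<in> A Nt \<and> z \<noteq> 0)"
lemma z0: "z0 \<in> A Nt" "z0 \<noteq> 0"
proof -
  have "\<exists>z. z \<in> A Nt \<and> z \<noteq> 0" using Nt(2) V.subspace_0[OF A_sub] by blast
  then have "z0 \<in> A Nt \<and> z0 \<noteq> 0" unfolding z0_def by (rule someI_ex)
  then show "z0 \<in> A Nt" "z0 \<noteq> 0" by auto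
qed

definition "om = (SOME \<mu>. g \<mu> = Nt \<and> good z0 \<mu>)"
lemma om: "g om = Nt" "good z0 om"
proof -
  have "g om = Nt \<and> good z0 om" unfolding om_def using good_ex[OF z0] by (rule someI_ex)
  then show "g om = Nt" "good z0 om" by auto
qed

lemma sc_good_om: assumes "y \<in> A d" "y \<noteq> 0" "sc y" shows "d = Nt" "good y om"
proof -
  obtain \<mu> where mu: "g \<mu> = d" "good y \<mu>" using good_ex[OF assms(1,2)] by blast
  have "\<mu> = om" using unique_good[OF assms(3) sc_top[OF z0(1)] mu(2) om(2)] .
  then show "d = Nt" "good y om" using mu om by auto
qed

lemma top_F: "A Nt \<subseteq> F om"
proof
  fix z assume z: "z \<in> A Nt"
  show "z \<in> F om"
  proof (cases "z = 0")
    case True then show ?thesis using V.subspace_0[OF F_sub] by simp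
  next
    case False
    then show ?thesis using sc_good_om(2)[OF z False sc_top[OF z]] unfolding good_def by blast
  qed
qed

definition "phi x = psi (cls (single om (cmpt x Nt)))"

lemma single_add: "single m (x + y) = (\<lambda>a. single m x a + single m y a)"
  unfolding single_def by auto
lemma single_smul: "single m (smul c x) = (\<lambda>a. smul c (single m x a))"
  unfolding single_def by auto

lemma phi_reps: "single om (cmpt x Nt) \<in> reps"
  using single_reps top_F cmpt(1) by blast

lemma phi_add: "phi (x + y) = phi x + phi y"
  unfolding phi_def cmpt_add single_add by (rule psi_add[OF phi_reps phi_reps])

lemma phi_smul: "phi (smul c x) = c * phi x"
  unfolding phi_def cmpt_smul single_smul by (rule psi_smul[OF phi_reps])

lemma key: assumes "x \<noteq> 0" shows "\<exists>a. a * x \<in> A Nt \<and> a * x \<noteq> 0"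
proof -
  have "\<exists>k. cmpt x k \<noteq> 0"
  proof (rule ccontr)
    assume "\<not> (\<exists>k. cmpt x k \<noteq> 0)"
    then have "x = 0" using cmpt(2)[of x] by simp
    then show False using assms by simp
  qed
  then obtain k0 where "cmpt x k0 \<noteq> 0" by blast
  define k where "k = (LEAST k. cmpt x k \<noteq> 0)"
  have xk: "cmpt x k \<noteq> 0" unfolding k_def by (rule LeastI) fact
  have below: "i < k \<Longrightarrow> cmpt x i = 0" for i unfolding k_def using not_less_Least by blast
  define xk where "xk = cmpt x k"
  have xkA: "xk \<in> A k" unfolding xk_def by (rule cmpt(1))
  define J where "J = {j. \<exists>a\<in>A j. a * xk \<noteq> 0}"
  have "1 \<in> A 0" using A0 V.scale_one by (metis rangeI)
  then have J0: "0 \<in> J" unfolding J_def xk_def using xk by (intro CollectI bexI[of _ 1]) auto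
  have Jn: "J \<subseteq> {..n}"
  proof
    fix j assume "j \<in> J"
    then obtain a where a: "a \<in> A j" "a * xk \<noteq> 0" unfolding J_def by blast
    show "j \<in> {..n}"
    proof (rule ccontr)
      assume "j \<notin> {..n}"
      then have "A j = {0}" using A_big by simp
      then show False using a by simp
    qed
  qed
  have finJ: "finite J" using Jn finite_subset by blast
  define j where "j = Max J"
  have jJ: "j \<in> J" unfolding j_def using finJ J0 by (intro Max_in) auto
  then obtain a where a: "a \<in> A j" "a * xk \<noteq> 0" unfolding J_def by blast
  define y where "y = a * xk"
  have yA: "y \<in> A (j + k)" unfolding y_def using A_mul a(1) xkA by blast
  have scy: "sc y" unfolding sc_def
  proof (intro allI impI)
    fix i u assume i: "0 < i" "u \<in> A i"
    have "u * a \<in> A (i + j)" using A_mul i(2) a(1) by blast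
    moreover have "i + j \<notin> J"
    proof
      assume "i + j \<in> J"
      then have "i + j \<le> j" unfolding j_def by (rule Max_ge[OF finJ])
      then show False using i by simp
    qed
    ultimately have "(u * a) * xk = 0" unfolding J_def by blast
    then show "u * y = 0" unfolding y_def by (simp add: mult.assoc)
  qed
  have jk: "j + k = Nt" using sc_good_om(1)[OF yA _ scy] a(2) unfolding y_def by blast
  have "a * x = (\<Sum>i\<le>n. a * cmpt x i)" using cmpt(2)[of x] by (metis sum_distrib_left)
  also have "\<dots> = (\<Sum>i\<le>n. if i = k then y else 0)"
  proof (rule sum.cong)
    fix i assume "i \<in> {..n}"
    show "a * cmpt x i = (if i = k then y else 0)"
    proof (cases "i < k")
      case True then show ?thesis using below by simp
    next
      case False
      show ?thesis
      proof (cases "i = k")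
        case True then show ?thesis unfolding y_def xk_def by simp
      next
        case ne: False
        with False have "i > k" by simp
        have "a * cmpt x i \<in> A (j + i)" using A_mul a(1) cmpt(1) by blast
        moreover have "A (j + i) = {0}" using Nt(3) jk \<open>i > k\<close> by simp
        ultimately show ?thesis using ne by simp
      qed
    qed
  qed simp
  also have "\<dots> = y"
  proof -
    have "k \<le> n"
    proof (rule ccontr)
      assume "\<not> k \<le> n"
      then have "A k = {0}" using A_big by simp
      then show False using xkA xk unfolding xk_def by simp
    qed
    then show ?thesis by simp
  qed
  finally have "a * x = y" .
  then show ?thesis using yA jk a(2) unfolding y_def by (intro exI[of _ a]) simp
qed

lemma phi_nz: assumes "y \<in> A Nt" "y \<noteq> 0" shows "phi y \<noteq> 0"
proof -
  have cy: "cmpt y Nt = y" using cmpt_hom[OF assms(1) Nt(1)] .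
  have gy: "good y om" using sc_good_om(2)[OF assms sc_top[OF assms(1)]] .
  have yF: "y \<in> F om" using gy unfolding good_def by blast
  show ?thesis unfolding phi_def cy
    using soc_psi[OF single_soc[OF yF sc_top[OF assms(1)]] single_ne[OF gy]] .
qed

lemma main: "frobenius UNIV (+) smul (*) 0"
  unfolding frobenius_def
proof (intro exI conjI allI ballI impI)
  fix x y :: 'a show "phi (x + y) = phi x + phi y" by (rule phi_add)
next
  fix c x show "phi (smul c x) = c * phi x" by (rule phi_smul)
next
  fix I assume I: "left_ideal UNIV (+) smul (*) 0 I" and z: "\<forall>x\<in>I. phi x = 0"
  show "I \<subseteq> {0}"
  proof
    fix x assume x: "x \<in> I"
    show "x \<in> {0}"
    proof (rule ccontr)
      assume "x \<notin> {0}"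
      then obtain a where a: "a * x \<in> A Nt" "a * x \<noteq> 0" using key by auto
      have "a * x \<in> I" using I x unfolding left_ideal_def by blast
      then show False using z phi_nz[OF a] by blast
    qed
  qed
qed

end

theorem proposition3:
  fixes smul :: "complex \<Rightarrow> 'a::ring_1 \<Rightarrow> 'a"
    and A :: "nat \<Rightarrow> 'a set" and n :: nat
    and g :: "'g::monoid_mult \<Rightarrow> nat" and lt :: "'g \<Rightarrow> 'g \<Rightarrow> bool"
    and F :: "'g \<Rightarrow> 'a set"
  assumes "graded_algebra smul A n"
    and "fin_dim smul"
    and "graded_ordered_semigroup g lt"
    and "gamma_filtration smul A g lt F"
    and "gr_frobenius smul lt F"
  shows "frobenius UNIV (+) smul (*) 0"
proof -
  interpret pf smul A n g lt F using assms(1,3,4,5) by unfold_locales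
  show ?thesis by (rule main)
qed

end
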